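(* Let the theory be one of the following: quantum many-worlds theory, unnormalised quantum many-worlds theory, or stochastic many-worlds theory. Let $p$ be a probability rule for that theory satisfying Axioms (A1)–(A3). Let $v=\sum_{n=0}^{N-1}v_n\lvert n\rangle$ be an allowed bounded state with $|v_l|>|v_k|$ for some indices $l,k$. Then $p_l(v)\ge p_k(v)$.
   Context: A linear many-worlds theory consists of the following data. The worlds are the vectors $\lvert n\rangle$, $n\in\{0,1,2,\dots\}$, of a countably infinite orthonormal basis of a real or complex vector space. A state is a vector $v=\sum_n v_n\lvert n\rangle$, and $v_n=\langle n\vert v\rangle$ is the amplitude of world $n$. A transformation is a linear operator $T$ with matrix elements $T_{ij}=\langle i\rvert T\lvert j\rangle$, acting by $v\mapsto Tv$. A theory specifies a set of allowed states and a set of allowed transformations, and every allowed transformation maps allowed states to allowed states. A state is bounded if only finitely many of its amplitudes are nonzero. The three theories are: - Quantum many-worlds theory: the allowed states are complex vectors with $\langle v\vert v\rangle=\sum_n|v_n|^2=1$, and the allowed transformations are all unitary operators. - Unnormalised quantum many-worlds theory: the allowed states are complex vectors with $0<\sum_n|v_n|^2<\infty$, and the allowed transformations are all unitary operators. - Stochastic many-worlds theory: the allowed states are real vectors with $v_n\ge0$ for all $n$ and $\sum_n v_n=1$, and the allowed transformations are the $T$ with $T_{ij}\ge0$ for all $i,j$ and $\sum_i T_{ij}=1$ for all $j$. A probability rule assigns to each allowed state $v$ a sequence $(p_n(v))_{n\ge 0}$ of nonnegative reals with $\sum_n p_n(v)=1$. The axioms are: (A1) Present state dependence: $p_n$ depends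 only on the present state $v$, so $p$ is a function of the state alone. (A2) Weak connection with amplitudes: for every allowed state $v$, $v_n=0$ implies $p_n(v)=0$. (A3) Weak connection with transformations: for every allowed state $v$ and allowed transformation $T$, and every partition of $\{0,1,2,\dots\}$ into subsets $\mathcal S_k$ such that $T_{ij}=0$ whenever $i$ and $j$ lie in different subsets, we have $\sum_{n\in\mathcal S_k}p_n(v)=\sum_{n\in\mathcal S_k}p_n(Tv)$ for every $k$. *)

theory Defs
  imports "HOL-Analysis.Analysis"
begin

text \<open>States are functions nat => scalar (amplitudes of the worlds |n>);
  transformations are given by their matrices T i j = <i|T|j>.\<close>

definition mat_apply :: "(nat \<Rightarrow> nat \<Rightarrow> 'a::real_normed_algebra) \<Rightarrow> (nat \<Rightarrow> 'a) \<Rightarrow> (nat \<Rightarrow> 'a)" where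
  "mat_apply T v = (\<lambda>i. \<Sum>\<^sub>\<infinity>j. T i j * v j)"

definition is_l2 :: "(nat \<Rightarrow> complex) \<Rightarrow> bool" where
  "is_l2 v \<longleftrightarrow> (\<lambda>n. (cmod (v n))^2) summable_on UNIV"

definition l2norm_sq :: "(nat \<Rightarrow> complex) \<Rightarrow> real" where
  "l2norm_sq v = (\<Sum>\<^sub>\<infinity>n. (cmod (v n))^2)"

definition unitary_mat :: "(nat \<Rightarrow> nat \<Rightarrow> complex) \<Rightarrow> bool" where
  "unitary_mat T \<longleftrightarrow>
     (\<forall>v. is_l2 v \<longrightarrow> (\<forall>i. (\<lambda>j. T i j * v j) summable_on UNIV)
                    \<and> is_l2 (mat_apply T v) \<and> l2norm_sq (mat_apply T v) = l2norm_sq v)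
   \<and> (\<forall>w. is_l2 w \<longrightarrow> (\<exists>v. is_l2 v \<and> mat_apply T v = w))"

definition quantum_states :: "(nat \<Rightarrow> complex) set" where
  "quantum_states = {v. ((\<lambda>n. (cmod (v n))^2) has_sum 1) UNIV}"

definition unnormalised_states :: "(nat \<Rightarrow> complex) set" where
  "unnormalised_states = {v. is_l2 v \<and> 0 < l2norm_sq v}"

definition unitary_transformations :: "(nat \<Rightarrow> nat \<Rightarrow> complex) set" where
  "unitary_transformations = {T. unitary_mat T}"

definition stochastic_states :: "(nat \<Rightarrow> real) set" where
  "stochastic_states = {v. (\<forall>n. 0 \<le> v n) \<and> (v has_sum 1) UNIV}"

definition stochastic_transformations :: "(nat \<Rightarrow> nat \<Rightarrow> real) set" where
  "stochastic_transformations =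
     {T. (\<forall>i j. 0 \<le> T i j) \<and> (\<forall>j. ((\<lambda>i. T i j) has_sum 1) UNIV)}"

text \<open>A probability rule is a function p of the state alone (A1 is built in).\<close>
definition probability_rule :: "(nat \<Rightarrow> 'a) set \<Rightarrow> ((nat \<Rightarrow> 'a) \<Rightarrow> nat \<Rightarrow> real) \<Rightarrow> bool" where
  "probability_rule S p \<longleftrightarrow> (\<forall>v\<in>S. (\<forall>n. 0 \<le> p v n) \<and> (p v has_sum 1) UNIV)"

definition axiom_A2 :: "(nat \<Rightarrow> 'a::zero) set \<Rightarrow> ((nat \<Rightarrow> 'a) \<Rightarrow> nat \<Rightarrow> real) \<Rightarrow> bool" where
  "axiom_A2 S p \<longleftrightarrow> (\<forall>v\<in>S. \<forall>n. v n = 0 \<longrightarrow> p v n = 0)"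

text \<open>Partitions of nat into subsets S_k are given by a labelling c: S_k = {n. c n = k}.\<close>
definition axiom_A3 :: "(nat \<Rightarrow> 'a::real_normed_algebra) set \<Rightarrow> (nat \<Rightarrow> nat \<Rightarrow> 'a) set
      \<Rightarrow> ((nat \<Rightarrow> 'a) \<Rightarrow> nat \<Rightarrow> real) \<Rightarrow> bool" where
  "axiom_A3 S Tr p \<longleftrightarrow>
     (\<forall>v\<in>S. \<forall>T\<in>Tr. \<forall>c::nat \<Rightarrow> nat.
        (\<forall>i j. c i \<noteq> c j \<longrightarrow> T i j = 0) \<longrightarrow>
        (\<forall>k. (\<Sum>\<^sub>\<infinity>n\<in>{n. c n = k}. p v n) = (\<Sum>\<^sub>\<infinity>n\<in>{n. c n = k}. p (mat_apply T v) n)))"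

definition satisfies_axioms :: "(nat \<Rightarrow> 'a::real_normed_algebra) set \<Rightarrow> (nat \<Rightarrow> nat \<Rightarrow> 'a) set
      \<Rightarrow> ((nat \<Rightarrow> 'a) \<Rightarrow> nat \<Rightarrow> real) \<Rightarrow> bool" where
  "satisfies_axioms S Tr p \<longleftrightarrow> probability_rule S p \<and> axiom_A2 S p \<and> axiom_A3 S Tr p"

definition bounded_state :: "(nat \<Rightarrow> 'a::zero) \<Rightarrow> bool" where
  "bounded_state v \<longleftrightarrow> finite {n. v n \<noteq> 0}"

end

theory Submission
  imports Defs
begin

lemma has_sum_modify:
  fixes f g :: "nat \<Rightarrow> 'a::{topological_ab_group_add, t2_space}"
  assumes "(f has_sum s) UNIV" "finite F" "\<And>n. n \<notin> F \<Longrightarrow> g n = f n"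
  shows "(g has_sum (s + (\<Sum>n\<in>F. g n - f n))) UNIV"
proof -
  have "((\<lambda>n. if n \<in> F then g n - f n else 0) has_sum (\<Sum>n\<in>F. g n - f n)) UNIV"
    by (rule has_sum_finite_neutralI[OF assms(2)]) auto
  from has_sum_add[OF assms(1) this] show ?thesis
  proof (subst (asm) has_sum_cong)
    show "f x + (if x \<in> F then g x - f x else 0) = g x" for x using assms(3)[of x] by auto
  qed
qed

definition blockshape :: "nat \<Rightarrow> nat \<Rightarrow> (nat \<Rightarrow> nat \<Rightarrow> 'a::zero) \<Rightarrow> bool" where
  "blockshape a b T \<longleftrightarrow> (\<forall>i j. i \<noteq> j \<longrightarrow> \<not>(i \<in> {a,b} \<and> j \<in> {a,b}) \<longrightarrow> T i j = 0)"

lemma A3_block: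
  assumes ax: "axiom_A3 S Tr p" and v: "v\<in>S" and T: "T\<in>Tr" and bs: "blockshape a b T" and ab: "a\<noteq>b"
  shows "p v a + p v b = p (mat_apply T v) a + p (mat_apply T v) b"
    and "n\<notin>{a,b} \<Longrightarrow> p v n = p (mat_apply T v) n"
proof -
  define c where "c = (\<lambda>n::nat. if n = b then a else n)"
  have "\<forall>i j. c i \<noteq> c j \<longrightarrow> T i j = 0" using bs unfolding blockshape_def c_def by auto
  hence eq: "\<And>k. (\<Sum>\<^sub>\<infinity>n\<in>{n. c n = k}. p v n) = (\<Sum>\<^sub>\<infinity>n\<in>{n. c n = k}. p (mat_apply T v) n)"
    using ax v T unfolding axiom_A3_def by blast
  have "{n. c n = a} = {a,b}" unfolding c_def using ab by auto
  with eq[of a] show "p v a + p v b = p (mat_apply T v) a + p (mat_apply T v) b" using ab by simp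
  assume n: "n\<notin>{a,b}"
  have "{x. c x = n} = {n}" unfolding c_def using n by auto
  with eq[of n] show "p v n = p (mat_apply T v) n" by simp
qed

definition blk :: "nat \<Rightarrow> nat \<Rightarrow> 'a \<Rightarrow> 'a \<Rightarrow> 'a \<Rightarrow> 'a \<Rightarrow> nat \<Rightarrow> nat \<Rightarrow> 'a::{zero,one}" where
  "blk a b \<alpha> \<beta> \<gamma> \<delta> i j = (if i=a \<and> j=a then \<alpha> else if i=a \<and> j=b then \<beta> else if i=b \<and> j=a then \<gamma>
     else if i=b \<and> j=b then \<delta> else if i=j then 1 else 0)"

lemma blockshape_blk: "blockshape a b (blk a b \<alpha> \<beta> \<gamma> \<delta>)"
  unfolding blockshape_def blk_def by auto

lemma blk_row_summable:
  fixes v :: "nat \<Rightarrow> 'a::real_normed_field"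
  shows "(\<lambda>j. blk a b \<alpha> \<beta> \<gamma> \<delta> i j * v j) summable_on UNIV"
  by (rule has_sum_imp_summable, rule has_sum_finite_neutralI[of "{a,b,i}" UNIV _ "\<Sum>j\<in>{a,b,i}. blk a b \<alpha> \<beta> \<gamma> \<delta> i j * v j"]) (auto simp: blk_def)

lemma mat_apply_blk:
  fixes v :: "nat \<Rightarrow> 'a::real_normed_field"
  assumes ab: "a \<noteq> b"
  shows "mat_apply (blk a b \<alpha> \<beta> \<gamma> \<delta>) v = v(a := \<alpha> * v a + \<beta> * v b, b := \<gamma> * v a + \<delta> * v b)"
proof
  fix i
  have "((\<lambda>j. blk a b \<alpha> \<beta> \<gamma> \<delta> i j * v j) has_sum (v(a := \<alpha> * v a + \<beta> * v b, b := \<gamma> * v a + \<delta> * v b)) i) UNIV"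
  proof (cases "i \<in> {a,b}")
    case True
    then show ?thesis using ab
      by (intro has_sum_finite_neutralI[of "{a,b}"]) (auto simp: blk_def)
  next
    case False
    then show ?thesis
      by (intro has_sum_finite_neutralI[of "{i}"]) (auto simp: blk_def)
  qed
  then show "mat_apply (blk a b \<alpha> \<beta> \<gamma> \<delta>) v i = (v(a := \<alpha> * v a + \<beta> * v b, b := \<gamma> * v a + \<delta> * v b)) i"
    unfolding mat_apply_def by (simp add: infsumI)
qed


lemma blk_l2:
  fixes v :: "nat \<Rightarrow> 'a::real_normed_field"
  assumes "((\<lambda>n. (norm (v n))^2) has_sum s) UNIV" "a \<noteq> b"
  shows "((\<lambda>n. (norm ((v(a := A, b := B)) n))^2) has_sum (s + ((norm A)^2 - (norm (v a))^2 + ((norm B)^2 - (norm (v b))^2)))) UNIV"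
  using has_sum_modify[OF assms(1), of "{a,b}" "\<lambda>n. (norm ((v(a := A, b := B)) n))^2"] assms(2)
  by simp

definition qblk :: "nat \<Rightarrow> nat \<Rightarrow> complex \<Rightarrow> complex \<Rightarrow> nat \<Rightarrow> nat \<Rightarrow> complex" where
  "qblk a b x y = blk a b x (- cnj y) y (cnj x)"

lemma norm_ident:
  fixes x y u w :: complex
  shows "(cmod (x*u - cnj y * w))^2 + (cmod (y*u + cnj x * w))^2 = ((cmod x)^2 + (cmod y)^2) * ((cmod u)^2 + (cmod w)^2)"
proof -
  have "complex_of_real ((cmod (x*u - cnj y * w))^2 + (cmod (y*u + cnj x * w))^2) = (x*u - cnj y*w)*cnj(x*u - cnj y*w) + (y*u + cnj x*w)*cnj(y*u+cnj x*w)"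
    by (simp only: of_real_add complex_norm_square)
  also have "\<dots> = (x*cnj x + y*cnj y)*(u*cnj u + w*cnj w)"
    by (simp only: complex_cnj_diff complex_cnj_add complex_cnj_mult complex_cnj_cnj) algebra
  also have "\<dots> = complex_of_real (((cmod x)^2 + (cmod y)^2) * ((cmod u)^2 + (cmod w)^2))"
    by (simp only: of_real_add of_real_mult complex_norm_square)
  finally show ?thesis using of_real_eq_iff by blast
qed

lemma unitary_qblk:
  assumes ab: "a \<noteq> b" and n1: "(cmod x)^2 + (cmod y)^2 = 1"
  shows "unitary_mat (qblk a b x y)"
proof -
  have xy: "x * cnj x + y * cnj y = 1"
  proof -
    have "complex_of_real ((cmod x)^2 + (cmod y)^2) = 1" using n1 by simp
    then show ?thesis by (simp only: of_real_add complex_norm_square)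
  qed
  have ma: "mat_apply (qblk a b x y) v = v(a := x * v a - cnj y * v b, b := y * v a + cnj x * v b)" for v
    unfolding qblk_def mat_apply_blk[OF ab] by simp
  show ?thesis
    unfolding unitary_mat_def
  proof (intro conjI allI impI)
    fix v i assume "is_l2 v"
    show "(\<lambda>j. qblk a b x y i j * v j) summable_on UNIV" unfolding qblk_def by (rule blk_row_summable)
  next
    fix v assume v: "is_l2 v"
    have hs: "((\<lambda>n. (cmod (v n))^2) has_sum l2norm_sq v) UNIV"
      using v unfolding is_l2_def l2norm_sq_def by simp
    have "((\<lambda>n. (cmod (mat_apply (qblk a b x y) v n))^2) has_sum l2norm_sq v) UNIV"
      using blk_l2[OF hs ab, of "x * v a - cnj y * v b" "y * v a + cnj x * v b"] norm_ident[of x "v a" y "v b"] n1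
      unfolding ma proof -
        have "l2norm_sq v + ((cmod (x * v a - cnj y * v b))\<^sup>2 - (cmod (v a))\<^sup>2 + ((cmod (y * v a + cnj x * v b))\<^sup>2 - (cmod (v b))\<^sup>2)) = l2norm_sq v"
          using norm_ident[of x "v a" y "v b"] n1 by simp
        then show "((\<lambda>n. (cmod ((v(a := x * v a - cnj y * v b, b := y * v a + cnj x * v b)) n))\<^sup>2) has_sum l2norm_sq v) UNIV"
          using blk_l2[OF hs ab, of "x * v a - cnj y * v b" "y * v a + cnj x * v b"] by simp
      qed
    then show "is_l2 (mat_apply (qblk a b x y) v)" "l2norm_sq (mat_apply (qblk a b x y) v) = l2norm_sq v"
      unfolding is_l2_def l2norm_sq_def using has_sum_iff by blast+
  next
    fix w assume w: "is_l2 w"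
    define v where "v = w(a := cnj x * w a + cnj y * w b, b := - y * w a + x * w b)"
    have hs: "((\<lambda>n. (cmod (w n))^2) has_sum l2norm_sq w) UNIV"
      using w unfolding is_l2_def l2norm_sq_def by simp
    have "is_l2 v" unfolding is_l2_def v_def by (rule has_sum_imp_summable[OF blk_l2[OF hs ab]])
    moreover have "mat_apply (qblk a b x y) v = w"
    proof -
      have e1: "x * (cnj x * p + cnj y * q) - cnj y * (x * q - y * p) = p" for p q :: complex
      proof -
        have "x * (cnj x * p + cnj y * q) - cnj y * (x * q - y * p) = (x * cnj x + y * cnj y) * p" by algebra
        then show ?thesis using xy by simp
      qed
      have e2: "y * (cnj x * p + cnj y * q) + cnj x * (x * q - y * p) = q" for p q :: complex
      proof -
        have "y * (cnj x * p + cnj y * q) + cnj x * (x * q - y * p) = (x * cnj x + y * cnj y) * q" by algebra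
        then show ?thesis using xy by simp
      qed
      show ?thesis unfolding ma v_def using ab by (intro ext) (simp add: e1 e2)
    qed
    ultimately show "\<exists>v. is_l2 v \<and> mat_apply (qblk a b x y) v = w" by blast
  qed
qed


lemma fresh:
  assumes "bounded_state (v :: nat \<Rightarrow> 'a::zero)"
  shows "\<exists>m. m \<noteq> l \<and> m \<noteq> k \<and> v m = 0"
proof -
  have "finite (insert l (insert k {n. v n \<noteq> 0}))" using assms unfolding bounded_state_def by simp
  from ex_new_if_finite[OF infinite_UNIV_nat this] show ?thesis by auto
qed

lemma core:
  fixes S :: "(nat \<Rightarrow> 'a::real_normed_field) set"
  assumes ax: "satisfies_axioms S Tr p"
  and move: "\<And>v a b. v\<in>S \<Longrightarrow> a\<noteq>b \<Longrightarrow> v b = 0 \<Longrightarrow>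
      \<exists>T\<in>Tr. blockshape a b T \<and> mat_apply T v = v(a:=0, b:=v a) \<and> v(a:=0, b:=v a) \<in> S"
  and split: "\<And>v l k m. v\<in>S \<Longrightarrow> l\<noteq>k \<Longrightarrow> l\<noteq>m \<Longrightarrow> k\<noteq>m \<Longrightarrow> v m = 0 \<Longrightarrow> norm (v k) < norm (v l) \<Longrightarrow>
      \<exists>T\<in>Tr. \<exists>y. blockshape l m T \<and> mat_apply T v = v(l:=v k, m:=y) \<and> v(l:=v k, m:=y) \<in> S"
  and v: "v\<in>S" "bounded_state v" "norm (v k) < norm (v l)"
  shows "p v k \<le> p v l"
proof -
  have a2: "\<And>v n. v\<in>S \<Longrightarrow> v n = 0 \<Longrightarrow> p v n = 0" using ax unfolding satisfies_axioms_def axiom_A2_def by blast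
  have a3: "axiom_A3 S Tr p" using ax unfolding satisfies_axioms_def by blast
  have pos: "\<And>v n. v\<in>S \<Longrightarrow> 0 \<le> p v n" using ax unfolding satisfies_axioms_def probability_rule_def by blast
  have eq: "p v l = p v k" if vS: "v\<in>S" and d: "l\<noteq>k" "m\<noteq>l" "m\<noteq>k" and vm: "v m = 0" and vlk: "v l = v k" for v l k m
  proof -
    define w where "w = v(k:=0, m:=v k)"
    obtain T1 where T1: "T1\<in>Tr" "blockshape k m T1" "mat_apply T1 v = w" "w \<in> S"
      using move[OF vS, of k m] d vm unfolding w_def by auto
    have w1: "p v k + p v m = p w k + p w m" and w2: "p v l = p w l"
      using A3_block[OF a3 vS T1(1) T1(2), of] d T1(3) by auto
    have wk: "w k = 0" unfolding w_def using d by simp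
    define u where "u = w(l:=0, k:=w l)"
    obtain T2 where T2: "T2\<in>Tr" "blockshape l k T2" "mat_apply T2 w = u" "u \<in> S"
      using move[OF T1(4), of l k] d wk unfolding u_def by auto
    have u1: "p w l + p w k = p u l + p u k"
      using A3_block[OF a3 T1(4) T2(1) T2(2)] d T2(3) by auto
    have ul: "u l = 0" unfolding u_def using d by simp
    define r where "r = u(m:=0, l:=u m)"
    obtain T3 where T3: "T3\<in>Tr" "blockshape m l T3" "mat_apply T3 u = r" "r \<in> S"
      using move[OF T2(4), of m l] d ul unfolding r_def by auto
    have r1: "p u k = p r k"
      using A3_block[OF a3 T2(4) T3(1) T3(2)] d T3(3) by auto
    have rv: "r = v" unfolding r_def u_def w_def using d vm vlk by (auto simp: fun_eq_iff)
    have "p w k = 0" using a2[OF T1(4) wk] .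
    moreover have "p u l = 0" using a2[OF T2(4) ul] .
    ultimately show ?thesis using w2 u1 r1 rv by simp
  qed
  have lk: "l \<noteq> k" using v(3) by auto
  obtain m where m: "m \<noteq> l" "m \<noteq> k" "v m = 0" using fresh[OF v(2)] by blast
  obtain T y where T: "T\<in>Tr" "blockshape l m T" "mat_apply T v = v(l:=v k, m:=y)" "v(l:=v k, m:=y) \<in> S"
    using split[OF v(1) lk _ _ m(3) v(3)] m by metis
  define w where "w = v(l:=v k, m:=y)"
  have wS: "w \<in> S" using T(4) unfolding w_def .
  have w1: "p v l + p v m = p w l + p w m" and w2: "p v k = p w k"
    using A3_block[OF a3 v(1) T(1) T(2)] m lk T(3) unfolding w_def by auto
  have "bounded_state w"
  proof -
    have "{n. w n \<noteq> 0} \<subseteq> insert m (insert l {n. v n \<noteq> 0})" unfolding w_def by auto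
    then show ?thesis using v(2) unfolding bounded_state_def by (simp add: finite_subset)
  qed
  then obtain m' where m': "m' \<noteq> l" "m' \<noteq> k" "w m' = 0" using fresh by blast
  have "w l = w k" unfolding w_def using m lk by simp
  then have "p w l = p w k" using eq[OF wS lk m'(1) m'(2) m'(3)] by simp
  moreover have "p v m = 0" using a2[OF v(1) m(3)] .
  moreover have "0 \<le> p w m" using pos[OF wS] .
  ultimately show ?thesis using w1 w2 by linarith
qed


lemma qstate_iff: "v \<in> quantum_states \<longleftrightarrow> is_l2 v \<and> l2norm_sq v = 1"
  unfolding quantum_states_def is_l2_def l2norm_sq_def using has_sum_iff by blast

lemma qmove:
  assumes v: "v \<in> S" and ab: "a \<noteq> b" and vb: "v b = 0"
    and Sdef: "S = quantum_states \<or> S = unnormalised_states"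
  shows "\<exists>T\<in>unitary_transformations. blockshape a b T \<and> mat_apply T v = v(a:=0, b:=v a) \<and> v(a:=0, b:=v a) \<in> S"
proof -
  have U: "unitary_mat (qblk a b 0 1)" by (rule unitary_qblk[OF ab]) simp
  have M: "mat_apply (qblk a b 0 1) v = v(a:=0, b:=v a)"
    unfolding qblk_def mat_apply_blk[OF ab] using vb by simp
  have l2: "is_l2 v" using v Sdef qstate_iff unnormalised_states_def by auto
  have "mat_apply (qblk a b 0 1) v \<in> S"
    using U l2 v Sdef by (auto simp: unitary_mat_def qstate_iff unnormalised_states_def)
  then have "v(a:=0, b:=v a) \<in> S" using M by simp
  moreover have "blockshape a b (qblk a b 0 1)" unfolding qblk_def by (rule blockshape_blk)
  moreover have "qblk a b 0 1 \<in> unitary_transformations" using U unfolding unitary_transformations_def by simp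
  ultimately show ?thesis using M by blast
qed

lemma qsplit:
  assumes v: "v \<in> S" and d: "l\<noteq>k" "l\<noteq>m" "k\<noteq>m" and vm: "v m = 0" and lt: "cmod (v k) < cmod (v l)"
    and Sdef: "S = quantum_states \<or> S = unnormalised_states"
  shows "\<exists>T\<in>unitary_transformations. \<exists>y. blockshape l m T \<and> mat_apply T v = v(l:=v k, m:=y) \<and> v(l:=v k, m:=y) \<in> S"
proof -
  have vl: "v l \<noteq> 0" using lt by auto
  define x where "x = v k / v l"
  have xl: "cmod x < 1" unfolding x_def using lt vl by (simp add: norm_divide divide_less_eq)
  define y where "y = complex_of_real (sqrt (1 - (cmod x)^2))"
  have "(cmod x)^2 < 1" using xl norm_ge_zero[of x] by (simp add: power_less_one_iff abs_square_less_1)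
  then have "(cmod y)^2 = 1 - (cmod x)^2" unfolding y_def by simp
  then have n1: "(cmod x)^2 + (cmod y)^2 = 1" by simp
  have U: "unitary_mat (qblk l m x y)" by (rule unitary_qblk[OF d(2) n1])
  have M: "mat_apply (qblk l m x y) v = v(l:=v k, m:=y * v l)"
    unfolding qblk_def mat_apply_blk[OF d(2)] using vm vl unfolding x_def by simp
  have l2: "is_l2 v" using v Sdef qstate_iff unnormalised_states_def by auto
  have "mat_apply (qblk l m x y) v \<in> S"
    using U l2 v Sdef by (auto simp: unitary_mat_def qstate_iff unnormalised_states_def)
  then have "v(l:=v k, m:=y * v l) \<in> S" using M by simp
  moreover have "blockshape l m (qblk l m x y)" unfolding qblk_def by (rule blockshape_blk)
  moreover have "qblk l m x y \<in> unitary_transformations" using U unfolding unitary_transformations_def by simp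
  ultimately show ?thesis using M by blast
qed

definition sblk :: "nat \<Rightarrow> nat \<Rightarrow> real \<Rightarrow> real \<Rightarrow> nat \<Rightarrow> nat \<Rightarrow> real" where
  "sblk a b \<alpha> \<beta> = blk a b \<alpha> \<beta> (1 - \<alpha>) (1 - \<beta>)"

lemma blk_nonneg:
  fixes p q r s :: real
  assumes "0 \<le> p" "0 \<le> q" "0 \<le> r" "0 \<le> s"
  shows "0 \<le> blk a b p q r s i j"
proof -
  show ?thesis unfolding blk_def using assms
    by (cases "i=a"; cases "j=a"; cases "i=b"; cases "j=b"; cases "i=j"; simp only: if_True if_False simp_thms; simp)
qed

lemma sblk_stoch:
  assumes ab: "a \<noteq> b" and r: "0 \<le> \<alpha>" "\<alpha> \<le> 1" "0 \<le> \<beta>" "\<beta> \<le> 1"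
  shows "sblk a b \<alpha> \<beta> \<in> stochastic_transformations"
  unfolding stochastic_transformations_def mem_Collect_eq
proof (intro conjI allI)
  fix i j show "0 \<le> sblk a b \<alpha> \<beta> i j" unfolding sblk_def by (rule blk_nonneg) (use r in auto)
next
  fix j
  show "((\<lambda>i. sblk a b \<alpha> \<beta> i j) has_sum 1) UNIV"
  proof (rule has_sum_finite_neutralI[of "{a,b,j}"])
    show "finite {a,b,j}" by simp
    show "{a,b,j} \<subseteq> UNIV" by simp
    show "sblk a b \<alpha> \<beta> x j = 0" if "x \<in> UNIV - {a,b,j}" for x
      using that unfolding sblk_def blk_def by auto
    show "1 = (\<Sum>i\<in>{a,b,j}. sblk a b \<alpha> \<beta> i j)"
    proof (cases "j = a")
      case True
      then have "{a,b,j} = {a,b}" by auto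
      then show ?thesis using ab True by (simp add: sblk_def blk_def)
    next
      case F1: False
      show ?thesis
      proof (cases "j = b")
        case True
        then have "{a,b,j} = {a,b}" by auto
        then show ?thesis using ab True by (simp add: sblk_def blk_def)
      next
        case False
        have "(\<Sum>i\<in>{a,b,j}. sblk a b \<alpha> \<beta> i j) = sblk a b \<alpha> \<beta> a j + sblk a b \<alpha> \<beta> b j + sblk a b \<alpha> \<beta> j j"
          using ab F1 False by simp
        then show ?thesis using ab F1 False by (simp add: sblk_def blk_def)
      qed
    qed
  qed
qed

lemma sblk_state:
  assumes v: "v \<in> stochastic_states" and ab: "a \<noteq> b" and r: "0 \<le> \<alpha>" "\<alpha> \<le> 1" "0 \<le> \<beta>" "\<beta> \<le> 1"
  shows "mat_apply (sblk a b \<alpha> \<beta>) v \<in> stochastic_states"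
proof -
  have M: "mat_apply (sblk a b \<alpha> \<beta>) v = v(a := \<alpha> * v a + \<beta> * v b, b := (1-\<alpha>) * v a + (1-\<beta>) * v b)"
    unfolding sblk_def mat_apply_blk[OF ab] ..
  have nn: "\<forall>n. 0 \<le> v n" and hs: "(v has_sum 1) UNIV" using v unfolding stochastic_states_def by auto
  have "0 \<le> (v(a := \<alpha> * v a + \<beta> * v b, b := (1-\<alpha>) * v a + (1-\<beta>) * v b)) n" for n
    using nn r by (auto intro!: add_nonneg_nonneg mult_nonneg_nonneg)
  moreover have "((v(a := \<alpha> * v a + \<beta> * v b, b := (1-\<alpha>) * v a + (1-\<beta>) * v b)) has_sum 1) UNIV"
  proof -
    have "((v(a := \<alpha> * v a + \<beta> * v b, b := (1-\<alpha>) * v a + (1-\<beta>) * v b)) has_sum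
         (1 + (\<Sum>n\<in>{a,b}. (v(a := \<alpha> * v a + \<beta> * v b, b := (1-\<alpha>) * v a + (1-\<beta>) * v b)) n - v n))) UNIV"
      by (rule has_sum_modify[OF hs]) auto
    moreover have "(\<Sum>n\<in>{a,b}. (v(a := \<alpha> * v a + \<beta> * v b, b := (1-\<alpha>) * v a + (1-\<beta>) * v b)) n - v n) = 0"
      using ab by (simp add: algebra_simps)
    ultimately show ?thesis by simp
  qed
  ultimately show ?thesis unfolding M stochastic_states_def by auto
qed

lemma smove:
  assumes v: "v \<in> stochastic_states" and ab: "a \<noteq> b" and vb: "v b = 0"
  shows "\<exists>T\<in>stochastic_transformations. blockshape a b T \<and> mat_apply T v = v(a:=0, b:=v a) \<and> v(a:=0, b:=v a) \<in> stochastic_states"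
proof -
  have M: "mat_apply (sblk a b 0 1) v = v(a:=0, b:=v a)"
    unfolding sblk_def mat_apply_blk[OF ab] using vb by simp
  show ?thesis using sblk_stoch[OF ab] sblk_state[OF v ab] M blockshape_blk unfolding sblk_def
    by (metis order_refl zero_le_one)
qed

lemma ssplit:
  assumes v: "v \<in> stochastic_states" and d: "l\<noteq>k" "l\<noteq>m" "k\<noteq>m" and vm: "v m = 0" and lt: "norm (v k) < norm (v l)"
  shows "\<exists>T\<in>stochastic_transformations. \<exists>y. blockshape l m T \<and> mat_apply T v = v(l:=v k, m:=y) \<and> v(l:=v k, m:=y) \<in> stochastic_states"
proof -
  have nn: "0 \<le> v k" "0 \<le> v l" using v unfolding stochastic_states_def by auto
  then have lt': "v k < v l" using lt by simp
  define \<alpha> where "\<alpha> = v k / v l"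
  have r: "0 \<le> \<alpha>" "\<alpha> \<le> 1" unfolding \<alpha>_def using nn lt' by auto
  have M: "mat_apply (sblk l m \<alpha> 1) v = v(l:=v k, m:=(1-\<alpha>) * v l)"
    unfolding sblk_def mat_apply_blk[OF d(2)] using vm lt' nn unfolding \<alpha>_def by simp
  show ?thesis using sblk_stoch[OF d(2) r] sblk_state[OF v d(2) r] M blockshape_blk unfolding sblk_def
    by (metis order_refl zero_le_one)
qed

theorem lemma2:
  shows "(\<forall>p v l k. satisfies_axioms quantum_states unitary_transformations p
             \<and> v \<in> quantum_states \<and> bounded_state v \<and> cmod (v l) > cmod (v k)
             \<longrightarrow> p v l \<ge> p v k)
       \<and> (\<forall>p v l k. satisfies_axioms unnormalised_states unitary_transformations p
             \<and> v \<in> unnormalised_states \<and> bounded_state v \<and> cmod (v l) > cmod (v k)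
             \<longrightarrow> p v l \<ge> p v k)
       \<and> (\<forall>p v l k. satisfies_axioms stochastic_states stochastic_transformations p
             \<and> v \<in> stochastic_states \<and> bounded_state v \<and> \<bar>v l\<bar> > \<bar>v k\<bar>
             \<longrightarrow> p v l \<ge> p v k)"
proof (intro conjI allI impI; elim conjE)
  fix p v l k
  assume ax: "satisfies_axioms quantum_states unitary_transformations p" and v: "v \<in> quantum_states" "bounded_state v" "cmod (v l) > cmod (v k)"
  have mv: "\<And>v a b. v\<in>quantum_states \<Longrightarrow> a\<noteq>b \<Longrightarrow> v b = 0 \<Longrightarrow>
      \<exists>T\<in>unitary_transformations. blockshape a b T \<and> mat_apply T v = v(a:=0, b:=v a) \<and> v(a:=0, b:=v a) \<in> quantum_states"
    by (rule qmove) auto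
  have sp: "\<And>v l k m. v\<in>quantum_states \<Longrightarrow> l\<noteq>k \<Longrightarrow> l\<noteq>m \<Longrightarrow> k\<noteq>m \<Longrightarrow> v m = 0 \<Longrightarrow> norm (v k) < norm (v l) \<Longrightarrow>
      \<exists>T\<in>unitary_transformations. \<exists>y. blockshape l m T \<and> mat_apply T v = v(l:=v k, m:=y) \<and> v(l:=v k, m:=y) \<in> quantum_states"
    by (rule qsplit) auto
  show "p v l \<ge> p v k" using core[OF ax mv sp v] .
next
  fix p v l k
  assume ax: "satisfies_axioms unnormalised_states unitary_transformations p" and v: "v \<in> unnormalised_states" "bounded_state v" "cmod (v l) > cmod (v k)"
  have mv: "\<And>v a b. v\<in>unnormalised_states \<Longrightarrow> a\<noteq>b \<Longrightarrow> v b = 0 \<Longrightarrow>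
      \<exists>T\<in>unitary_transformations. blockshape a b T \<and> mat_apply T v = v(a:=0, b:=v a) \<and> v(a:=0, b:=v a) \<in> unnormalised_states"
    by (rule qmove) auto
  have sp: "\<And>v l k m. v\<in>unnormalised_states \<Longrightarrow> l\<noteq>k \<Longrightarrow> l\<noteq>m \<Longrightarrow> k\<noteq>m \<Longrightarrow> v m = 0 \<Longrightarrow> norm (v k) < norm (v l) \<Longrightarrow>
      \<exists>T\<in>unitary_transformations. \<exists>y. blockshape l m T \<and> mat_apply T v = v(l:=v k, m:=y) \<and> v(l:=v k, m:=y) \<in> unnormalised_states"
    by (rule qsplit) auto
  show "p v l \<ge> p v k" using core[OF ax mv sp v] .
next
  fix p v l k
  assume ax: "satisfies_axioms stochastic_states stochastic_transformations p" and v: "v \<in> stochastic_states" "bounded_state v" "\<bar>v l\<bar> > \<bar>v k\<bar>"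
  have v3: "norm (v k) < norm (v l)" using v(3) by simp
  show "p v l \<ge> p v k" using core[OF ax smove ssplit v(1,2) v3] .
qed

end
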